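(* Let $C\colon y^2=f(x)$ be a hyperelliptic curve over $K$ with $f(x)\in\mathcal O_K[x]$. If $d_{\mathcal R}=0$, $v(c_f)=0$ and there is no cluster $\mathfrak s\neq\mathcal R$ with $|\mathfrak s|>g+1$, then $y^2=f(x)$ is a minimal Weierstrass equation for $C$.
   Context: $K$ is a non-archimedean local field with ring of integers $\mathcal O_K$, finite residue field of characteristic $p\ne2$, valuation $v$ on $\bar K$ normalised on $K$. $f$ is separable of degree $2g+1$ or $2g+2$, $g\ge2$ the genus, with leading coefficient $c_f$ and roots $\mathcal R$. Clusters: non-empty $D\cap\mathcal R$ for discs $D=\{x\in\bar K:v(x-z)\ge d\}$; $d_{\mathcal R}=\min_{r,r'\in\mathcal R}v(r-r')$. The discriminant of $y^2=h(x)$ is $16^gc_h^{4g+2}\mathrm{disc}(h/c_h)$; an integral Weierstrass equation for $C$ is a $K$-isomorphic model $y^2=h(x)$, $h\in\mathcal O_K[x]$, and it is minimal if its discriminant has minimal valuation among all integral Weierstrass equations for $C$. *)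

theory Defs
  imports "HOL-Computational_Algebra.Polynomial" "HOL-Library.Extended_Real"
begin

text \<open>Ambient field: a type 'a playing the role of an algebraic closure of K;
  K is a subset of 'a; v is a valuation on 'a with values in ereal (v 0 = \<infinity>).\<close>

definition is_subfield :: "'a::field set \<Rightarrow> bool" where
  "is_subfield K \<longleftrightarrow> 0 \<in> K \<and> 1 \<in> K \<and>
     (\<forall>x\<in>K. \<forall>y\<in>K. x + y \<in> K \<and> x * y \<in> K \<and> - x \<in> K) \<and>
     (\<forall>x\<in>K. x \<noteq> 0 \<longrightarrow> inverse x \<in> K)"

definition alg_closed :: "'a::field itself \<Rightarrow> bool" where
  "alg_closed _ \<longleftrightarrow> (\<forall>p :: 'a poly. 0 < degree p \<longrightarrow> (\<exists>x. poly p x = 0))"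

definition algebraic_over :: "'a::field set \<Rightarrow> bool" where
  "algebraic_over K \<longleftrightarrow>
     (\<forall>x::'a. \<exists>p. p \<noteq> 0 \<and> set (coeffs p) \<subseteq> K \<and> poly p x = 0)"

definition is_valuation :: "('a::field \<Rightarrow> ereal) \<Rightarrow> bool" where
  "is_valuation v \<longleftrightarrow> (\<forall>x. v x = \<infinity> \<longleftrightarrow> x = 0) \<and>
     (\<forall>x y. v (x * y) = v x + v y) \<and>
     (\<forall>x y. v (x + y) \<ge> min (v x) (v y))"

definition v_cauchy :: "('a \<Rightarrow> ereal) \<Rightarrow> (nat \<Rightarrow> 'a::field) \<Rightarrow> bool" where
  "v_cauchy v a \<longleftrightarrow> (\<forall>N::real. \<exists>M. \<forall>m\<ge>M. \<forall>n\<ge>M. v (a m - a n) \<ge> ereal N)"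

definition v_converges_to :: "('a \<Rightarrow> ereal) \<Rightarrow> (nat \<Rightarrow> 'a::field) \<Rightarrow> 'a \<Rightarrow> bool" where
  "v_converges_to v a L \<longleftrightarrow> (\<forall>N::real. \<exists>M. \<forall>n\<ge>M. v (a n - L) \<ge> ereal N)"

text \<open>K is a non-archimedean local field inside its algebraic closure 'a, with valuation v
  on 'a normalised on K: K complete, v discrete and normalised on K (v(K^*) = Z),
  residue field O_K/m_K finite, of characteristic p \<noteq> 2 (i.e. 2 is a unit: v 2 = 0).\<close>

definition local_field_setup :: "'a::field set \<Rightarrow> ('a \<Rightarrow> ereal) \<Rightarrow> bool" where
  "local_field_setup K v \<longleftrightarrow>
     is_subfield K \<and> alg_closed TYPE('a) \<and> algebraic_over K \<and> is_valuation v \<and>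
     v ` (K - {0}) = {ereal (real_of_int n) | n. True} \<and>
     (\<forall>a. (\<forall>n. a n \<in> K) \<longrightarrow> v_cauchy v a \<longrightarrow> (\<exists>L\<in>K. v_converges_to v a L)) \<and>
     (\<exists>S. finite S \<and> S \<subseteq> {x\<in>K. v x \<ge> 0} \<and>
          (\<forall>x\<in>K. v x \<ge> 0 \<longrightarrow> (\<exists>s\<in>S. v (x - s) > 0))) \<and>
     v 2 = 0"

definition poly_roots :: "'a::field poly \<Rightarrow> 'a set" where
  "poly_roots f = {r. poly f r = 0}"

definition is_cluster :: "('a::field \<Rightarrow> ereal) \<Rightarrow> 'a poly \<Rightarrow> 'a set \<Rightarrow> bool" where
  "is_cluster v f s \<longleftrightarrow> s \<noteq> {} \<and>
     (\<exists>z::'a. \<exists>d::real. s = {r \<in> poly_roots f. v (r - z) \<ge> ereal d})"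

definition d_R :: "('a::field \<Rightarrow> ereal) \<Rightarrow> 'a poly \<Rightarrow> ereal" where
  "d_R v f = Min {v (r - r') | r r'. r \<in> poly_roots f \<and> r' \<in> poly_roots f}"

text \<open>Discriminant of a monic polynomial h, computed from its roots in the algebraically
  closed field: (-1)^(n(n-1)/2) prod_{r \<noteq> r'} (r - r') = prod_{i<j} (r_i - r_j)^2
  when h has n distinct roots, and 0 if h has a repeated root.\<close>

definition disc_monic :: "'a::field poly \<Rightarrow> 'a" where
  "disc_monic h = (if rsquarefree h then
      (-1) ^ (degree h * (degree h - 1) div 2) *
      (\<Prod>r\<in>poly_roots h. \<Prod>r'\<in>poly_roots h - {r}. (r - r'))
    else 0)"

definition weq_disc :: "nat \<Rightarrow> 'a::field poly \<Rightarrow> 'a" where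
  "weq_disc g h = 16 ^ g * lead_coeff h ^ (4 * g + 2) *
      disc_monic (smult (inverse (lead_coeff h)) h)"

text \<open>Change of Weierstrass model for a genus g hyperelliptic curve:
  x = (a x' + b)/(c x' + d), y = e y' / (c x' + d)^(g+1), with a,b,c,d,e \<in> K,
  ad - bc \<noteq> 0, e \<noteq> 0; the new equation is y'^2 = h(x') with
  h(x') = e^(-2) (c x' + d)^(2g+2) f((a x' + b)/(c x' + d)).\<close>

definition weq_transform :: "nat \<Rightarrow> 'a::field poly \<Rightarrow> 'a \<Rightarrow> 'a \<Rightarrow> 'a \<Rightarrow> 'a \<Rightarrow> 'a \<Rightarrow> 'a poly" where
  "weq_transform g f a b c d e = smult (inverse (e ^ 2))
     (\<Sum>i\<le>2 * g + 2. smult (coeff f i) ([:b, a:] ^ i * [:d, c:] ^ (2 * g + 2 - i)))"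

definition K_isomorphic_model :: "'a::field set \<Rightarrow> nat \<Rightarrow> 'a poly \<Rightarrow> 'a poly \<Rightarrow> bool" where
  "K_isomorphic_model K g f h \<longleftrightarrow>
     (\<exists>a\<in>K. \<exists>b\<in>K. \<exists>c\<in>K. \<exists>d\<in>K. \<exists>e\<in>K. a * d - b * c \<noteq> 0 \<and> e \<noteq> 0 \<and>
        h = weq_transform g f a b c d e)"

definition integral_poly :: "('a::field \<Rightarrow> ereal) \<Rightarrow> 'a poly \<Rightarrow> bool" where
  "integral_poly v h \<longleftrightarrow> (\<forall>i. v (coeff h i) \<ge> 0)"

definition minimal_weq :: "'a::field set \<Rightarrow> ('a \<Rightarrow> ereal) \<Rightarrow> nat \<Rightarrow> 'a poly \<Rightarrow> bool" where
  "minimal_weq K v g f \<longleftrightarrow> integral_poly v f \<and>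
     (\<forall>h. K_isomorphic_model K g f h \<longrightarrow> integral_poly v h \<longrightarrow>
          v (weq_disc g f) \<le> v (weq_disc g h))"

end

theory Submission
  imports Defs
begin

locale valn =
  fixes v :: "'a::field \<Rightarrow> ereal"
  assumes isv: "is_valuation v" and v2: "v 2 = 0"
begin

definition w :: "'a \<Rightarrow> real" where "w x = real_of_ereal (v x)"

lemma v_mult: "v (x * y) = v x + v y" using isv unfolding is_valuation_def by blast
lemma v_add: "v (x + y) \<ge> min (v x) (v y)" using isv unfolding is_valuation_def by blast
lemma v_inf_iff: "v x = \<infinity> \<longleftrightarrow> x = 0" using isv unfolding is_valuation_def by blast
lemma v_zero[simp]: "v 0 = \<infinity>" using v_inf_iff by blast
lemma two_nz: "(2::'a) \<noteq> 0" using v2 v_zero by force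
lemma v_one[simp]: "v 1 = 0"
proof -
  have "v 2 = v 2 + v 1" using v_mult[of 2 1] by simp
  then show ?thesis using v2 by simp
qed
lemma v_notminf: "v x \<noteq> -\<infinity>"
proof
  assume h: "v x = -\<infinity>"
  then have x: "x \<noteq> 0" by auto
  have "v 2 = v x + v (2 / x)" using v_mult[of x "2/x"] x by simp
  moreover have "v (2/x) \<noteq> \<infinity>" using x two_nz v_inf_iff by auto
  ultimately show False using h v2 by (cases "v (2/x)") auto
qed
lemma v_fin: "x \<noteq> 0 \<Longrightarrow> v x = ereal (w x)"
  unfolding w_def using v_notminf v_inf_iff by (cases "v x") auto
lemma v_neg1[simp]: "v (-1) = 0"
proof -
  have "v 1 = v (-1) + v (-1)" using v_mult[of "-1" "-1"] by simp
  then show ?thesis using v_fin[of "-1"] by (simp add: ereal_eq_0(1))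
qed
lemma v_uminus[simp]: "v (- x) = v x"
  using v_mult[of "-1" x] by simp
lemma v_diff: "v (x - y) \<ge> min (v x) (v y)"
  using v_add[of x "-y"] by simp
lemma v_diff_comm: "v (x - y) = v (y - x)"
  using v_uminus[of "x - y"] by simp
lemma v_add_strict: assumes "v x < v y" shows "v (x + y) = v x"
proof -
  have a: "v (x + y) \<ge> v x" using v_add[of x y] assms by simp
  have "v x \<ge> min (v (x+y)) (v y)" using v_add[of "x+y" "-y"] by simp
  then have "v x \<ge> v (x + y)" using assms by (auto simp: min_def split: if_splits)
  with a show ?thesis by simp
qed
lemma w_mult: "x \<noteq> 0 \<Longrightarrow> y \<noteq> 0 \<Longrightarrow> w (x * y) = w x + w y"
  using v_mult[of x y] v_fin by (metis mult_eq_0_iff plus_ereal.simps(1) ereal.inject)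
lemma w_one[simp]: "w 1 = 0" by (simp add: w_def)
lemma w_neg1[simp]: "w (-1) = 0" by (simp add: w_def)
lemma w_uminus[simp]: "w (-x) = w x" by (simp add: w_def)
lemma w_inverse: "x \<noteq> 0 \<Longrightarrow> w (inverse x) = - w x"
  using w_mult[of x "inverse x"] by simp
lemma w_divide: "x \<noteq> 0 \<Longrightarrow> y \<noteq> 0 \<Longrightarrow> w (x / y) = w x - w y"
  by (simp add: divide_inverse w_mult w_inverse)
lemma w_power: "x \<noteq> 0 \<Longrightarrow> w (x ^ n) = n * w x"
  by (induction n) (auto simp: w_mult algebra_simps)
lemma w_prod: "finite A \<Longrightarrow> (\<And>i. i \<in> A \<Longrightarrow> f i \<noteq> 0) \<Longrightarrow> w (\<Prod>i\<in>A. f i) = (\<Sum>i\<in>A. w (f i))"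
  by (induction A rule: finite_induct) (auto simp: w_mult)
lemma w_two[simp]: "w 2 = 0" by (simp add: w_def v2)
lemma w_16[simp]: "w (16 ^ g) = 0"
proof -
  have "(16::'a)^g = 2^(4*g)" by (simp add: power_mult)
  then show ?thesis using w_power[of 2] two_nz by simp
qed
end

definition lin :: "'a::field \<times> 'a \<Rightarrow> 'a poly" where "lin p = [:snd p, fst p:]"
definition det2 :: "'a::field \<times> 'a \<Rightarrow> 'a \<times> 'a \<Rightarrow> 'a" where
  "det2 p q = fst p * snd q - snd p * fst q"

lemma coeff_lin_mult: "coeff (lin (a, b) * p) i = b * coeff p i + (if i = 0 then 0 else a * coeff p (i - 1))"
proof -
  have "lin (a, b) * p = smult b p + pCons 0 (smult a p)"
    by (simp add: lin_def mult_pCons_left)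
  then show ?thesis by (cases i) auto
qed

lemma eadd_le_less: fixes a b c d :: ereal
  assumes "a \<le> b" "c < d" "\<bar>a\<bar> \<noteq> \<infinity>" "\<bar>c\<bar> \<noteq> \<infinity>" "b \<noteq> -\<infinity>"
  shows "a + c < b + d"
  using assms by (cases a; cases b; cases c; cases d) auto

context valn begin

definition mv :: "'a \<times> 'a \<Rightarrow> ereal" where "mv p = min (v (fst p)) (v (snd p))"

definition cont :: "'a poly \<Rightarrow> ereal \<Rightarrow> bool" where
  "cont p W \<longleftrightarrow> (\<forall>i. W \<le> v (coeff p i)) \<and> (\<exists>i. v (coeff p i) = W)"

lemma mv_fin: "p \<noteq> (0, 0) \<Longrightarrow> \<bar>mv p\<bar> \<noteq> \<infinity>"
  unfolding mv_def using v_notminf v_inf_iff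
  by (cases p) (auto simp: min_def)

lemma v_abs_fin: "x \<noteq> 0 \<Longrightarrow> \<bar>v x\<bar> \<noteq> \<infinity>"
  using v_fin by auto

lemma cont_step:
  assumes c: "cont p W" and W: "\<bar>W\<bar> \<noteq> \<infinity>" and ab: "(a, b) \<noteq> (0, 0)"
  shows "cont (lin (a, b) * p) (mv (a, b) + W)"
proof -
  let ?m = "mv (a, b)"
  have lowi: "\<forall>i. W \<le> v (coeff p i)" using c unfolding cont_def by blast
  have low: "?m + W \<le> v (coeff (lin (a, b) * p) i)" for i
  proof -
    have 1: "?m + W \<le> v (b * coeff p i)"
      using lowi by (simp add: v_mult mv_def add_mono)
    show ?thesis
    proof (cases "i = 0")
      case True then show ?thesis using 1 by (simp add: coeff_lin_mult)
    next
      case False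
      have 2: "?m + W \<le> v (a * coeff p (i - 1))"
        using lowi by (simp add: v_mult mv_def add_mono)
      have "min (v (b * coeff p i)) (v (a * coeff p (i - 1))) \<le> v (coeff (lin (a, b) * p) i)"
        using False v_add by (simp add: coeff_lin_mult)
      then show ?thesis using 1 2 by (meson min.bounded_iff order_trans)
    qed
  qed
  obtain i0 where i0: "v (coeff p i0) = W" using c unfolding cont_def by blast
  define Z where "Z = {i. v (coeff p i) = W}"
  have Zfin: "finite Z"
  proof -
    have "Z \<subseteq> {..degree p}"
      unfolding Z_def using W by (auto simp: coeff_eq_0 not_le intro: ccontr)
    then show ?thesis using finite_subset by blast
  qed
  have Zne: "i0 \<in> Z" using i0 Z_def by simp
  have gtW: "i \<notin> Z \<Longrightarrow> W < v (coeff p i)" for i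
    using lowi unfolding Z_def by (metis order_le_less mem_Collect_eq)
  have "\<exists>i. v (coeff (lin (a, b) * p) i) = ?m + W"
  proof (cases "v a \<le> v b")
    case True
    then have m: "?m = v a" by (simp add: mv_def)
    have anz: "a \<noteq> 0"
    proof
      assume a0: "a = 0"
      then have "v b = \<infinity>" using True by simp
      then have "b = 0" using v_inf_iff by simp
      then show False using ab a0 by simp
    qed
    define I where "I = Max Z"
    have IZ: "I \<in> Z" using Zfin Zne I_def Max_in by blast
    have "Suc I \<notin> Z"
    proof
      assume "Suc I \<in> Z"
      then have "Suc I \<le> I" using Max_ge[OF Zfin] I_def by blast
      then show False by simp
    qed
    then have lt: "W < v (coeff p (Suc I))" using gtW by blast
    have e1: "v (a * coeff p I) = ?m + W" using IZ m by (simp add: Z_def v_mult)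
    have e2: "v (b * coeff p (Suc I)) = v b + v (coeff p (Suc I))" by (simp add: v_mult)
    have "v a + W < v b + v (coeff p (Suc I))"
      using eadd_le_less[OF True lt] v_abs_fin[OF anz] W v_notminf by blast
    then have "v (a * coeff p I) < v (b * coeff p (Suc I))"
      unfolding e1 m e2 .
    then have "v (a * coeff p I + b * coeff p (Suc I)) = ?m + W"
      using v_add_strict e1 by simp
    then show ?thesis by (rule_tac x="Suc I" in exI) (simp add: coeff_lin_mult add.commute)
  next
    case False
    then have m: "?m = v b" by (simp add: mv_def)
    have bnz: "b \<noteq> 0"
    proof
      assume "b = 0" then show False using False by simp
    qed
    define I where "I = Min Z"
    have IZ: "I \<in> Z" using Zfin Zne I_def Min_in by blast
    have e1: "v (b * coeff p I) = ?m + W" using IZ m by (simp add: Z_def v_mult)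
    show ?thesis
    proof (cases "I = 0")
      case True then show ?thesis using e1 by (rule_tac x=I in exI) (simp add: coeff_lin_mult)
    next
      case False
      have "I - 1 \<notin> Z"
      proof
        assume "I - 1 \<in> Z"
        then have "I \<le> I - 1" using Min_le[OF Zfin] I_def by blast
        then show False using False by simp
      qed
      then have lt: "W < v (coeff p (I - 1))" using gtW by blast
      have e2: "v (a * coeff p (I - 1)) = v a + v (coeff p (I - 1))" by (simp add: v_mult)
      have ba: "v b \<le> v a" using \<open>\<not> v a \<le> v b\<close> by simp
      have "v b + W < v a + v (coeff p (I - 1))"
        using eadd_le_less[OF ba lt] v_abs_fin[OF bnz] W v_notminf by blast
      then have "v (b * coeff p I) < v (a * coeff p (I - 1))"
        unfolding e1 m e2 .
      then have "v (b * coeff p I + a * coeff p (I - 1)) = ?m + W"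
        using v_add_strict e1 by simp
      then show ?thesis using False by (rule_tac x="I" in exI) (simp add: coeff_lin_mult)
    qed
  qed
  then show ?thesis using low unfolding cont_def by blast
qed

lemma gauss:
  assumes "finite J" "\<And>j. j \<in> J \<Longrightarrow> q j \<noteq> (0, 0)"
  shows "cont (\<Prod>j\<in>J. lin (q j)) (\<Sum>j\<in>J. mv (q j)) \<and> \<bar>\<Sum>j\<in>J. mv (q j)\<bar> \<noteq> \<infinity>"
  using assms
proof (induction J rule: finite_induct)
  case empty
  have "cont 1 0" unfolding cont_def
    by (auto simp: coeff_1 intro: exI[of _ 0])
  then show ?case by simp
next
  case (insert j F)
  then have IH: "cont (\<Prod>j\<in>F. lin (q j)) (\<Sum>j\<in>F. mv (q j))" "\<bar>\<Sum>j\<in>F. mv (q j)\<bar> \<noteq> \<infinity>" by auto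
  have qj: "q j \<noteq> (0, 0)" using insert by auto
  obtain a b where ab: "q j = (a, b)" by fastforce
  have "cont (lin (q j) * (\<Prod>j\<in>F. lin (q j))) (mv (q j) + (\<Sum>j\<in>F. mv (q j)))"
    using cont_step[OF IH(1) IH(2), of a b] qj ab by simp
  moreover have "\<bar>mv (q j) + (\<Sum>j\<in>F. mv (q j))\<bar> \<noteq> \<infinity>"
    using mv_fin[OF qj] IH(2) by (cases "mv (q j)"; cases "\<Sum>j\<in>F. mv (q j)") auto
  ultimately show ?case using insert by simp
qed

end

definition hom :: "nat \<Rightarrow> 'a::field poly \<Rightarrow> 'a poly \<Rightarrow> 'a poly \<Rightarrow> 'a poly" where
  "hom N p A B = (\<Sum>i\<le>N. smult (coeff p i) (A ^ i * B ^ (N - i)))"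

lemma smult_sum_r: "smult c (\<Sum>i\<in>S. f i) = (\<Sum>i\<in>S. smult c (f i))"
  by (induction S rule: infinite_finite_induct) (auto simp: smult_add_right)

lemma hom_smult: "hom N (smult c p) A B = smult c (hom N p A B)"
  unfolding hom_def smult_sum_r by simp

lemma hom_mult_lin:
  assumes "degree p \<le> M"
  shows "hom (Suc M) (lin (a, b) * p) A B = (smult a A + smult b B) * hom M p A B"
proof -
  have "hom (Suc M) (lin (a, b) * p) A B =
      (\<Sum>i\<le>Suc M. smult (b * coeff p i) (A ^ i * B ^ (Suc M - i))) +
      (\<Sum>i\<le>Suc M. smult (if i = 0 then 0 else a * coeff p (i - 1)) (A ^ i * B ^ (Suc M - i)))"
    unfolding hom_def coeff_lin_mult by (simp add: smult_add_left sum.distrib)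
  also have "(\<Sum>i\<le>Suc M. smult (b * coeff p i) (A ^ i * B ^ (Suc M - i))) =
      (\<Sum>i\<le>M. smult (b * coeff p i) (A ^ i * B ^ (Suc M - i)))"
    using assms by (simp add: coeff_eq_0)
  also have "\<dots> = smult b B * hom M p A B"
    unfolding hom_def sum_distrib_left
    by (rule sum.cong) (auto simp: Suc_diff_le algebra_simps)
  also have "(\<Sum>i\<le>Suc M. smult (if i = 0 then 0 else a * coeff p (i - 1)) (A ^ i * B ^ (Suc M - i))) =
      (\<Sum>i\<le>M. smult (a * coeff p i) (A ^ Suc i * B ^ (M - i)))"
    by (subst sum.atMost_Suc_shift) simp
  also have "\<dots> = smult a A * hom M p A B"
    unfolding hom_def sum_distrib_left
    by (rule sum.cong) (auto simp: algebra_simps)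
  finally show ?thesis by (simp add: algebra_simps)
qed

lemma degree_lin: "degree (lin p) \<le> 1"
  by (simp add: lin_def degree_pCons_le)

lemma degree_prod_lin: "finite J \<Longrightarrow> degree (\<Prod>j\<in>J. lin (q j)) \<le> card J"
proof (induction J rule: finite_induct)
  case (insert j F)
  have "degree (lin (q j) * (\<Prod>j\<in>F. lin (q j))) \<le> degree (lin (q j)) + degree (\<Prod>j\<in>F. lin (q j))"
    by (rule degree_mult_le)
  also have "\<dots> \<le> 1 + card F" using insert degree_lin by (meson add_mono)
  finally show ?case using insert by simp
qed simp

lemma hom_prod:
  assumes "finite J"
  shows "hom (card J) (\<Prod>j\<in>J. lin (q j)) A B = (\<Prod>j\<in>J. smult (fst (q j)) A + smult (snd (q j)) B)"
  using assms
proof (induction J rule: finite_induct)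
  case empty
  then show ?case by (simp add: hom_def)
next
  case (insert j F)
  obtain a b where ab: "q j = (a, b)" by fastforce
  have "hom (card (insert j F)) (\<Prod>j\<in>insert j F. lin (q j)) A B =
        hom (Suc (card F)) (lin (a, b) * (\<Prod>j\<in>F. lin (q j))) A B"
    using insert ab by simp
  also have "\<dots> = (smult a A + smult b B) * hom (card F) (\<Prod>j\<in>F. lin (q j)) A B"
    by (rule hom_mult_lin[OF degree_prod_lin[OF insert(1)]])
  finally show ?case using insert ab by simp
qed

definition tr :: "'a::field \<Rightarrow> 'a \<Rightarrow> 'a \<Rightarrow> 'a \<Rightarrow> 'a \<times> 'a \<Rightarrow> 'a \<times> 'a" where
  "tr a b c d p = (fst p * a + snd p * c, fst p * b + snd p * d)"

lemma det2_tr: "det2 (tr a b c d p) (tr a b c d q) = (a * d - b * c) * det2 p q"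
  by (simp add: det2_def tr_def algebra_simps)

lemma tr_nz: "a * d - b * c \<noteq> 0 \<Longrightarrow> p \<noteq> (0, 0) \<Longrightarrow> tr a b c d p \<noteq> (0, 0)"
proof
  assume D: "a * d - b * c \<noteq> 0" and p: "p \<noteq> (0, 0)" and t: "tr a b c d p = (0, 0)"
  obtain x y where xy: "p = (x, y)" by fastforce
  have e1: "x * a + y * c = 0" "x * b + y * d = 0" using t xy by (auto simp: tr_def)
  have "x * (a * d - b * c) = d * (x * a + y * c) - c * (x * b + y * d)" by (simp add: algebra_simps)
  then have "x = 0" using e1 D by simp
  moreover have "y * (a * d - b * c) = a * (x * b + y * d) - b * (x * a + y * c)" by (simp add: algebra_simps)
  then have "y = 0" using e1 D by simp
  ultimately show False using xy p by simp
qed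

lemma weq_transform_prod:
  assumes "finite J" "card J = 2 * g + 2" "f = smult lam (\<Prod>j\<in>J. lin (q j))"
  shows "weq_transform g f a b c d e = smult (lam / e ^ 2) (\<Prod>j\<in>J. lin (tr a b c d (q j)))"
proof -
  have "weq_transform g f a b c d e = smult (inverse (e ^ 2)) (hom (card J) f [:b, a:] [:d, c:])"
    unfolding weq_transform_def hom_def using assms(2) by simp
  also have "hom (card J) f [:b, a:] [:d, c:] = smult lam (\<Prod>j\<in>J. smult (fst (q j)) [:b, a:] + smult (snd (q j)) [:d, c:])"
    using assms(3) hom_smult hom_prod[OF assms(1)] by metis
  also have "(\<Prod>j\<in>J. smult (fst (q j)) [:b, a:] + smult (snd (q j)) [:d, c:]) = (\<Prod>j\<in>J. lin (tr a b c d (q j)))"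
    by (rule prod.cong) (auto simp: lin_def tr_def algebra_simps)
  finally show ?thesis by (simp add: divide_inverse mult.commute)
qed

lemma split_rsf:
  fixes p :: "'a::field poly"
  assumes ac: "alg_closed TYPE('a)" and rsf: "rsquarefree p"
  shows "finite (poly_roots p) \<and> p = smult (lead_coeff p) (\<Prod>r\<in>poly_roots p. [:-r, 1:])"
  using rsf
proof (induction "degree p" arbitrary: p rule: less_induct)
  case less
  have p0: "p \<noteq> 0" using less.prems rsquarefree_def by blast
  have fin: "finite (poly_roots p)" using poly_roots_finite[OF p0] by (simp add: poly_roots_def)
  show ?case
  proof (cases "degree p = 0")
    case True
    define c where "c = coeff p 0"
    have pc: "p = [:c:]" using degree_0_id[OF True] c_def by simp
    have c0: "c \<noteq> 0" using pc p0 by simp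
    have "poly_roots p = {}" using c0 pc unfolding poly_roots_def by simp
    moreover have "lead_coeff p = c" using pc by simp
    ultimately show ?thesis using pc fin by simp
  next
    case False
    then obtain r where r: "poly p r = 0" using ac unfolding alg_closed_def by blast
    then obtain q where pq: "p = [:-r, 1:] * q" using poly_eq_0_iff_dvd by (metis dvdE)
    have q0: "q \<noteq> 0" using pq p0 by auto
    have ord: "order x p = order x [:-r, 1:] + order x q" for x
      using order_mult p0 pq by metis
    have ordr: "order r [:-r, 1:] = 1" using order_power_n_n[of r 1] by simp
    have "order x q = 0 \<or> order x q = 1" for x
    proof -
      have "order x p = 0 \<or> order x p = 1" using less.prems unfolding rsquarefree_def by blast
      then show ?thesis using ord[of x] by auto
    qed
    then have rsq: "rsquarefree q" unfolding rsquarefree_def using q0 by blast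
    have rq: "poly q r \<noteq> 0"
    proof
      assume "poly q r = 0"
      then have "order r q \<noteq> 0" using q0 order_root by blast
      moreover have "order r p = 0 \<or> order r p = 1" using less.prems unfolding rsquarefree_def by blast
      ultimately show False using ord[of r] ordr by linarith
    qed
    have "degree ([:-r, 1:] * q) = degree [:-r, 1:] + degree q" by (rule degree_mult_eq) (use q0 in auto)
    then have dq: "degree q < degree p" using pq by simp
    have IH: "finite (poly_roots q) \<and> q = smult (lead_coeff q) (\<Prod>r\<in>poly_roots q. [:-r, 1:])"
      using less.hyps[OF dq rsq] .
    have roots: "poly_roots p = insert r (poly_roots q)"
      using pq unfolding poly_roots_def by auto
    have rn: "r \<notin> poly_roots q" using rq by (simp add: poly_roots_def)
    have "lead_coeff ([:-r, 1:] * q) = lead_coeff [:-r, 1:] * lead_coeff q" by (rule lead_coeff_mult)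
    moreover have "lead_coeff [:-r, 1:] = 1" by simp
    ultimately have lc: "lead_coeff p = lead_coeff q" using pq by (simp only: mult_1)
    have peq: "p = smult (lead_coeff q) ([:-r, 1:] * (\<Prod>r\<in>poly_roots q. [:-r, 1:]))"
      using pq IH by (metis mult_smult_right)
    have e: "(\<Prod>r\<in>poly_roots p. [:-r, 1:]) = [:-r, 1:] * (\<Prod>r\<in>poly_roots q. [:-r, 1:])"
      by (simp only: roots prod.insert[OF conjunct1[OF IH] rn])
    show ?thesis unfolding e lc using fin peq by blast
  qed
qed

lemma prod_lin_props:
  fixes R :: "'a::field set"
  assumes "finite R"
  shows "poly_roots (\<Prod>r\<in>R. [:-r, 1:]) = R \<and> degree (\<Prod>r\<in>R. [:-r, 1:]) = card R
    \<and> lead_coeff (\<Prod>r\<in>R. [:-r, 1:]) = 1 \<and> rsquarefree (\<Prod>r\<in>R. [:-r, 1:])"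
  using assms
proof (induction R rule: finite_induct)
  case empty
  then show ?case by (simp add: poly_roots_def rsquarefree_def)
next
  case (insert r F)
  let ?P = "\<Prod>r\<in>F. [:-r, 1:]"
  have P0: "?P \<noteq> 0" using insert rsquarefree_def by blast
  have e: "(\<Prod>r\<in>insert r F. [:-r, 1:]) = [:-r, 1:] * ?P" using insert by simp
  have roots: "poly_roots ([:-r, 1:] * ?P) = insert r F"
    using insert unfolding poly_roots_def by auto
  have "degree ([:-r, 1:] * ?P) = degree [:-r, 1:] + degree ?P"
    by (rule degree_mult_eq) (auto simp: P0)
  then have deg: "degree ([:-r, 1:] * ?P) = card (insert r F)"
    using insert by simp
  have "lead_coeff ([:-r, 1:] * ?P) = lead_coeff [:-r, 1:] * lead_coeff ?P" by (rule lead_coeff_mult)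
  moreover have l1: "lead_coeff [:-r, 1:] = 1" by simp
  moreover have l2: "lead_coeff ?P = 1" using insert.IH by blast
  ultimately have lc: "lead_coeff ([:-r, 1:] * ?P) = 1" by (simp only: mult_1)
  have nr: "poly ?P r \<noteq> 0" using insert unfolding poly_roots_def by blast
  have nz: "[:-r, 1:] * ?P \<noteq> 0" using P0 by (metis mult_eq_0_iff pCons_eq_0_iff zero_neq_one)
  have "order x ([:-r, 1:] * ?P) = 0 \<or> order x ([:-r, 1:] * ?P) = 1" for x
  proof -
    have o: "order x ([:-r, 1:] * ?P) = order x [:-r, 1:] + order x ?P"
      using order_mult[OF nz] .
    show ?thesis
    proof (cases "x = r")
      case True
      then show ?thesis using o order_0I[OF nr] order_power_n_n[of r 1] by simp
    next
      case False
      then have "order x [:-r, 1:] = 0" by (intro order_0I) simp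
      then show ?thesis using o insert unfolding rsquarefree_def by simp
    qed
  qed
  then have "rsquarefree ([:-r, 1:] * ?P)" unfolding rsquarefree_def using nz by blast
  then show ?case using e roots deg lc by simp
qed

lemma disc_monic_prod:
  fixes R :: "'a::field set"
  assumes "finite R"
  shows "disc_monic (\<Prod>r\<in>R. [:-r, 1:]) =
    (-1) ^ (card R * (card R - 1) div 2) * (\<Prod>r\<in>R. \<Prod>r'\<in>R - {r}. (r - r'))"
  using prod_lin_props[OF assms] unfolding disc_monic_def by simp

lemma prod_smult_distrib: "(\<Prod>j\<in>J. smult (c j) (p j)) = smult (\<Prod>j\<in>J. c j) (\<Prod>j\<in>J. p j)"
proof (induction J rule: infinite_finite_induct)
  case (insert x F)
  have "(\<Prod>j\<in>insert x F. smult (c j) (p j)) = smult (c x) (p x) * smult (prod c F) (prod p F)"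
    using insert by simp
  also have "\<dots> = smult (c x * prod c F) (p x * prod p F)"
    by (metis mult_smult_left mult_smult_right smult_smult mult.commute)
  finally show ?case unfolding prod.insert[OF insert(1,2)] .
qed auto

lemma sum_pairs_real:
  fixes a :: "'i \<Rightarrow> real"
  assumes fin: "finite J"
  shows "(\<Sum>j\<in>J. \<Sum>k\<in>J - {j}. a j + a k) = 2 * (real (card J) - 1) * (\<Sum>j\<in>J. a j)"
proof -
  have inner: "(\<Sum>k\<in>J - {j}. a j + a k) = (real (card J) - 1) * a j + ((\<Sum>k\<in>J. a k) - a j)"
    if j: "j \<in> J" for j
  proof -
    have c: "card (J - {j}) = card J - 1" using j fin by (simp add: card_Diff_singleton)
    have c0: "0 < card J" using fin j by (auto simp: card_gt_0_iff)
    then have c1: "card J \<ge> 1" by simp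
    have r: "real (card (J - {j})) = real (card J) - 1" using c c1 by (simp add: of_nat_diff)
    have "(\<Sum>k\<in>J - {j}. a j + a k) = (\<Sum>k\<in>J - {j}. a j) + (\<Sum>k\<in>J - {j}. a k)"
      by (rule sum.distrib)
    also have "(\<Sum>k\<in>J - {j}. a j) = real (card (J - {j})) * a j"
      by (rule sum_constant)
    also have "(\<Sum>k\<in>J - {j}. a k) = (\<Sum>k\<in>J. a k) - a j"
      using j fin by (simp add: sum_diff1)
    finally show ?thesis unfolding r .
  qed
  have "(\<Sum>j\<in>J. \<Sum>k\<in>J - {j}. a j + a k) = (\<Sum>j\<in>J. (real (card J) - 1) * a j + ((\<Sum>k\<in>J. a k) - a j))"
    by (rule sum.cong[OF refl]) (rule inner)
  also have "\<dots> = (\<Sum>j\<in>J. (real (card J) - 1) * a j) + (\<Sum>j\<in>J. (\<Sum>k\<in>J. a k) - a j)"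
    by (rule sum.distrib)
  also have "(\<Sum>j\<in>J. (real (card J) - 1) * a j) = (real (card J) - 1) * (\<Sum>j\<in>J. a j)"
    by (rule sum_distrib_left[symmetric])
  also have "(\<Sum>j\<in>J. (\<Sum>k\<in>J. a k) - a j) = (\<Sum>j\<in>J. (\<Sum>k\<in>J. a k)) - (\<Sum>j\<in>J. a j)"
    by (rule sum_subtractf)
  also have "(\<Sum>j\<in>J. (\<Sum>k\<in>J. a k)) = real (card J) * (\<Sum>j\<in>J. a j)"
    by (rule sum_constant)
  also have "(real (card J) - 1) * (\<Sum>j\<in>J. a j) + (real (card J) * (\<Sum>j\<in>J. a j) - (\<Sum>j\<in>J. a j))
     = 2 * (real (card J) - 1) * (\<Sum>j\<in>J. a j)"
    by (simp add: algebra_simps)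
  finally show ?thesis .
qed

context valn begin

lemma wq:
  assumes h0: "h \<noteq> 0" and fin: "finite R"
    and hm: "smult (inverse (lead_coeff h)) h = (\<Prod>r\<in>R. [:-r, 1:])"
  shows "v (weq_disc g h) = ereal ((4 * g + 2) * w (lead_coeff h) + (\<Sum>r\<in>R. \<Sum>r'\<in>R - {r}. w (r - r')))"
proof -
  let ?k = "card R * (card R - 1) div 2"
  let ?P = "\<Prod>r\<in>R. \<Prod>r'\<in>R - {r}. (r - r')"
  have lc0: "lead_coeff h \<noteq> 0" using h0 by simp
  have wd: "weq_disc g h = 16 ^ g * lead_coeff h ^ (4 * g + 2) * ((-1) ^ ?k * ?P)"
    unfolding weq_disc_def hm disc_monic_prod[OF fin] ..
  have P0: "?P \<noteq> 0" using fin by (auto simp: prod_zero_iff)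
  have s0: "(16::'a) ^ g \<noteq> 0"
  proof -
    have "(16::'a) ^ g = 2 ^ (4 * g)" by (simp add: power_mult)
    then show ?thesis using two_nz by simp
  qed
  have wP: "w ?P = (\<Sum>r\<in>R. \<Sum>r'\<in>R - {r}. w (r - r'))"
  proof -
    have "w ?P = (\<Sum>r\<in>R. w (\<Prod>r'\<in>R - {r}. (r - r')))"
      by (rule w_prod[OF fin]) (use fin in \<open>auto simp: prod_zero_iff\<close>)
    also have "\<dots> = (\<Sum>r\<in>R. \<Sum>r'\<in>R - {r}. w (r - r'))"
      by (rule sum.cong[OF refl], rule w_prod) (use fin in auto)
    finally show ?thesis .
  qed
  have "w (weq_disc g h) = (4 * g + 2) * w (lead_coeff h) + w ?P"
    unfolding wd using s0 lc0 P0 by (simp add: w_mult w_power algebra_simps)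
  moreover have "weq_disc g h \<noteq> 0" unfolding wd using s0 lc0 P0 by simp
  ultimately show ?thesis using v_fin wP by simp
qed

lemma core:
  assumes fin: "finite J" and mu: "mu \<noteq> 0"
    and al: "\<And>j. j \<in> J \<Longrightarrow> fst (q j) \<noteq> 0"
    and dt: "\<And>j k. j \<in> J \<Longrightarrow> k \<in> J \<Longrightarrow> j \<noteq> k \<Longrightarrow> det2 (q j) (q k) \<noteq> 0"
  shows "v (weq_disc g (smult mu (\<Prod>j\<in>J. lin (q j)))) = ereal ((4 * g + 2) * (w mu + (\<Sum>j\<in>J. w (fst (q j))))
     + (\<Sum>j\<in>J. \<Sum>k\<in>J - {j}. w (det2 (q j) (q k))) - 2 * (real (card J) - 1) * (\<Sum>j\<in>J. w (fst (q j))))"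
proof -
  define rho where "rho j = - snd (q j) / fst (q j)" for j
  have linq: "lin (q j) = smult (fst (q j)) [:- rho j, 1:]" if "j \<in> J" for j
    using al[OF that] by (simp add: lin_def rho_def)
  have inj: "inj_on rho J"
  proof (rule inj_onI)
    fix j k assume jk: "j \<in> J" "k \<in> J" "rho j = rho k"
    show "j = k"
    proof (rule ccontr)
      assume "j \<noteq> k"
      have "det2 (q j) (q k) = fst (q j) * fst (q k) * (rho j - rho k)"
        using al[OF jk(1)] al[OF jk(2)] by (simp add: det2_def rho_def field_simps)
      then show False using dt[OF jk(1,2) \<open>j \<noteq> k\<close>] jk(3) by simp
    qed
  qed
  let ?R = "rho ` J"
  let ?A = "\<Prod>j\<in>J. fst (q j)"
  have A0: "?A \<noteq> 0" using al fin by (simp add: prod_zero_iff)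
  have pe: "(\<Prod>j\<in>J. lin (q j)) = smult ?A (\<Prod>r\<in>?R. [:-r, 1:])"
  proof -
    have "(\<Prod>j\<in>J. lin (q j)) = (\<Prod>j\<in>J. smult (fst (q j)) [:- rho j, 1:])"
      using linq by (rule prod.cong[OF refl])
    also have "\<dots> = smult ?A (\<Prod>j\<in>J. [:- rho j, 1:])" by (rule prod_smult_distrib)
    also have "(\<Prod>j\<in>J. [:- rho j, 1:]) = (\<Prod>r\<in>?R. [:-r, 1:])"
      using prod.reindex[OF inj, of "\<lambda>r. [:-r, 1:]"] by simp
    finally show ?thesis .
  qed
  have Rfin: "finite ?R" using fin by simp
  note pp = prod_lin_props[OF Rfin]
  let ?h = "smult mu (\<Prod>j\<in>J. lin (q j))"
  have he: "?h = smult (mu * ?A) (\<Prod>r\<in>?R. [:-r, 1:])" using pe by simp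
  have Pnz: "(\<Prod>r\<in>?R. [:-r, 1:]) \<noteq> 0" using pp rsquarefree_def by blast
  have h0: "?h \<noteq> 0" using he mu A0 Pnz by simp
  have "lead_coeff ?h = (mu * ?A) * lead_coeff (\<Prod>r\<in>?R. [:-r, 1:])" unfolding he by (rule lead_coeff_smult)
  then have lc: "lead_coeff ?h = mu * ?A" using pp by (metis mult.right_neutral)
  have hm: "smult (inverse (lead_coeff ?h)) ?h = (\<Prod>r\<in>?R. [:-r, 1:])"
  proof -
    have "smult (inverse (lead_coeff ?h)) ?h = smult (inverse (mu * ?A) * (mu * ?A)) (\<Prod>r\<in>?R. [:-r, 1:])"
      unfolding lc unfolding he smult_smult ..
    also have "inverse (mu * ?A) * (mu * ?A) = 1" by (rule left_inverse) (use mu A0 in simp)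
    finally show ?thesis by simp
  qed
  have wq1: "v (weq_disc g ?h) = ereal ((4 * g + 2) * w (mu * ?A) + (\<Sum>r\<in>?R. \<Sum>r'\<in>?R - {r}. w (r - r')))"
    using wq[OF h0 Rfin hm, of g] unfolding lc by simp
  have wA: "w (mu * ?A) = w mu + (\<Sum>j\<in>J. w (fst (q j)))"
    using mu A0 al fin by (simp add: w_mult w_prod)
  have re: "(\<Sum>r\<in>?R. \<Sum>r'\<in>?R - {r}. w (r - r')) = (\<Sum>j\<in>J. \<Sum>k\<in>J - {j}. w (rho j - rho k))"
  proof -
    have "(\<Sum>r\<in>?R. \<Sum>r'\<in>?R - {r}. w (r - r')) = (\<Sum>j\<in>J. \<Sum>r'\<in>?R - {rho j}. w (rho j - r'))"
      by (rule sum.reindex[OF inj, unfolded comp_def])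
    also have "\<dots> = (\<Sum>j\<in>J. \<Sum>k\<in>J - {j}. w (rho j - rho k))"
    proof (rule sum.cong[OF refl])
      fix j assume j: "j \<in> J"
      have "?R - {rho j} = rho ` (J - {j})" using inj j by (auto simp: inj_on_def)
      moreover have "inj_on rho (J - {j})" using inj by (rule inj_on_subset) auto
      ultimately show "(\<Sum>r'\<in>?R - {rho j}. w (rho j - r')) = (\<Sum>k\<in>J - {j}. w (rho j - rho k))"
        using sum.reindex[of rho "J - {j}" "\<lambda>r'. w (rho j - r')"] by simp
    qed
    finally show ?thesis .
  qed
  have rd: "w (rho j - rho k) = w (det2 (q j) (q k)) - (w (fst (q j)) + w (fst (q k)))"
    if "j \<in> J" "k \<in> J - {j}" for j k
  proof -
    have k: "k \<in> J" "j \<noteq> k" using that by auto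
    have "rho j - rho k = det2 (q j) (q k) / (fst (q j) * fst (q k))"
      using al[OF that(1)] al[OF k(1)] by (simp add: det2_def rho_def field_simps)
    then show ?thesis using al[OF that(1)] al[OF k(1)] dt[OF that(1) k] by (simp add: w_divide w_mult)
  qed
  have "(\<Sum>j\<in>J. \<Sum>k\<in>J - {j}. w (rho j - rho k)) =
        (\<Sum>j\<in>J. \<Sum>k\<in>J - {j}. w (det2 (q j) (q k)) - (w (fst (q j)) + w (fst (q k))))"
    by (rule sum.cong[OF refl], rule sum.cong[OF refl], rule rd) auto
  also have "\<dots> = (\<Sum>j\<in>J. \<Sum>k\<in>J - {j}. w (det2 (q j) (q k))) - (\<Sum>j\<in>J. \<Sum>k\<in>J - {j}. w (fst (q j)) + w (fst (q k)))"
    by (simp only: sum_subtractf)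
  also have "(\<Sum>j\<in>J. \<Sum>k\<in>J - {j}. w (fst (q j)) + w (fst (q k))) = 2 * (real (card J) - 1) * (\<Sum>j\<in>J. w (fst (q j)))"
    by (rule sum_pairs_real[OF fin])
  finally show ?thesis using wq1 wA re by (simp add: algebra_simps)
qed

end

context valn begin

lemma disc_formula:
  assumes fin: "finite J" and cJ: "card J = 2 * g + 2" and lam: "lam \<noteq> 0"
    and dt: "\<And>j k. j \<in> J \<Longrightarrow> k \<in> J \<Longrightarrow> j \<noteq> k \<Longrightarrow> det2 (q j) (q k) \<noteq> 0"
  shows "v (weq_disc g (smult lam (\<Prod>j\<in>J. lin (q j)))) =
    ereal ((4 * real g + 2) * w lam + (\<Sum>j\<in>J. \<Sum>k\<in>J - {j}. w (det2 (q j) (q k))))"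
proof (cases "\<forall>j\<in>J. fst (q j) \<noteq> 0")
  case True
  have "v (weq_disc g (smult lam (\<Prod>j\<in>J. lin (q j)))) = ereal ((4 * real g + 2) * (w lam + (\<Sum>j\<in>J. w (fst (q j))))
     + (\<Sum>j\<in>J. \<Sum>k\<in>J - {j}. w (det2 (q j) (q k))) - 2 * (real (card J) - 1) * (\<Sum>j\<in>J. w (fst (q j))))"
    using core[OF fin lam, of q g] True dt by blast
  also have "real (card J) - 1 = 2 * g + 1" using cJ by simp
  finally show ?thesis by (simp add: algebra_simps)
next
  case False
  then obtain j0 where j0: "j0 \<in> J" "fst (q j0) = 0" by blast
  define J' where "J' = J - {j0}"
  define b0 where "b0 = snd (q j0)"
  have fin': "finite J'" using fin J'_def by simp
  have cJ': "card J' = 2 * g + 1" using cJ j0 fin J'_def by (simp add: card_Diff_singleton)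
  have d1: "det2 (q j0) (q k) = - (b0 * fst (q k))" for k
    using j0 by (simp add: det2_def b0_def)
  have d2: "det2 (q k) (q j0) = fst (q k) * b0" for k
    using j0 by (simp add: det2_def b0_def)
  have kJ: "k \<in> J" "k \<noteq> j0" if "k \<in> J'" for k using that J'_def by auto
  have nzk: "b0 \<noteq> 0 \<and> fst (q k) \<noteq> 0" if "k \<in> J'" for k
    using dt[OF j0(1) kJ(1)[OF that]] kJ(2)[OF that] d1[of k] by auto
  have "J' \<noteq> {}" using cJ' by auto
  then have b0: "b0 \<noteq> 0" using nzk by blast
  have al: "fst (q k) \<noteq> 0" if "k \<in> J'" for k using nzk that by blast
  have dt': "det2 (q j) (q k) \<noteq> 0" if "j \<in> J'" "k \<in> J'" "j \<noteq> k" for j k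
    using dt kJ that by blast
  have lin0: "lin (q j0) = [:b0:]" using j0 by (simp add: lin_def b0_def)
  have pe: "smult lam (\<Prod>j\<in>J. lin (q j)) = smult (lam * b0) (\<Prod>j\<in>J'. lin (q j))"
  proof -
    have "(\<Prod>j\<in>J. lin (q j)) = lin (q j0) * (\<Prod>j\<in>J'. lin (q j))"
      unfolding J'_def by (rule prod.remove[OF fin j0(1)])
    also have "\<dots> = smult b0 (\<Prod>j\<in>J'. lin (q j))" unfolding lin0 by simp
    finally show ?thesis by simp
  qed
  have lb: "lam * b0 \<noteq> 0" using lam b0 by simp
  let ?S = "\<Sum>j\<in>J'. w (fst (q j))"
  let ?D = "\<Sum>j\<in>J'. \<Sum>k\<in>J' - {j}. w (det2 (q j) (q k))"
  have c: "v (weq_disc g (smult (lam * b0) (\<Prod>j\<in>J'. lin (q j)))) = ereal ((4 * real g + 2) * (w (lam * b0) + ?S)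
     + ?D - 2 * (real (card J') - 1) * ?S)"
    using core[OF fin' lb, of q g] al dt' by blast
  have F0: "(\<Sum>k\<in>J - {j0}. w (det2 (q j0) (q k))) = real (card J') * w b0 + ?S"
  proof -
    have "(\<Sum>k\<in>J - {j0}. w (det2 (q j0) (q k))) = (\<Sum>k\<in>J'. w b0 + w (fst (q k)))"
      unfolding J'_def[symmetric] by (rule sum.cong[OF refl]) (simp add: d1 w_mult b0 al)
    also have "\<dots> = real (card J') * w b0 + ?S" by (simp add: sum.distrib)
    finally show ?thesis .
  qed
  have Fj: "(\<Sum>k\<in>J - {j}. w (det2 (q j) (q k))) = (w (fst (q j)) + w b0) + (\<Sum>k\<in>J' - {j}. w (det2 (q j) (q k)))"
    if j: "j \<in> J'" for j
  proof -
    have e: "J - {j} = insert j0 (J' - {j})" using j j0 J'_def by auto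
    have "(\<Sum>k\<in>J - {j}. w (det2 (q j) (q k))) = w (det2 (q j) (q j0)) + (\<Sum>k\<in>J' - {j}. w (det2 (q j) (q k)))"
      unfolding e by (rule sum.insert) (use fin' J'_def in auto)
    also have "w (det2 (q j) (q j0)) = w (fst (q j)) + w b0" using d2 w_mult al[OF j] b0 by simp
    finally show ?thesis .
  qed
  have "(\<Sum>j\<in>J. \<Sum>k\<in>J - {j}. w (det2 (q j) (q k))) =
      (\<Sum>k\<in>J - {j0}. w (det2 (q j0) (q k))) + (\<Sum>j\<in>J'. \<Sum>k\<in>J - {j}. w (det2 (q j) (q k)))"
    unfolding J'_def by (rule sum.remove[OF fin j0(1)])
  also have "(\<Sum>j\<in>J'. \<Sum>k\<in>J - {j}. w (det2 (q j) (q k))) = (\<Sum>j\<in>J'. (w (fst (q j)) + w b0) + (\<Sum>k\<in>J' - {j}. w (det2 (q j) (q k))))"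
    by (rule sum.cong[OF refl]) (rule Fj)
  also have "\<dots> = ?S + real (card J') * w b0 + ?D" by (simp add: sum.distrib)
  finally have R: "(\<Sum>j\<in>J. \<Sum>k\<in>J - {j}. w (det2 (q j) (q k))) = 2 * ?S + 2 * real (card J') * w b0 + ?D"
    unfolding F0 by simp
  have wl: "w (lam * b0) = w lam + w b0" using lam b0 by (simp add: w_mult)
  show ?thesis unfolding pe c R wl cJ' by (simp add: algebra_simps)
qed

end

lemma comb_bound:
  fixes m :: "'i \<Rightarrow> real" and far :: "'i \<Rightarrow> 'i \<Rightarrow> bool"
  assumes fin: "finite J" and cJ: "card J = 2 * G"
    and Sb: "\<And>j0. j0 \<in> J \<Longrightarrow> card {k\<in>J. k = j0 \<or> \<not> far k j0} \<le> G"
    and pr: "\<And>j k. j \<in> J \<Longrightarrow> k \<in> J \<Longrightarrow> j \<noteq> k \<Longrightarrow> far k j \<Longrightarrow> m j + m k \<le> Dv"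
  shows "(\<Sum>j\<in>J. m j) \<le> G * Dv"
proof (cases "J = {}")
  case True then show ?thesis using cJ by simp
next
  case False
  define mu where "mu = Max (m ` J)"
  have "mu \<in> m ` J" unfolding mu_def using fin False by (intro Max_in) auto
  then obtain j0 where j0: "j0 \<in> J" "m j0 = mu" by auto
  have le: "m k \<le> mu" if "k \<in> J" for k unfolding mu_def using fin that by (intro Max_ge) auto
  define S where "S = {k\<in>J. k = j0 \<or> \<not> far k j0}"
  have Sfin: "finite S" "S \<subseteq> J" using fin S_def by auto
  have cS: "card S \<le> G" using Sb[OF j0(1)] S_def by simp
  have out: "m k \<le> Dv - mu" if "k \<in> J - S" for k
  proof -
    have "k \<in> J" "k \<noteq> j0" "far k j0" using that S_def by auto
    then show ?thesis using pr[OF j0(1), of k] j0(2) by simp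
  qed
  show ?thesis
  proof (cases "2 * mu \<le> Dv")
    case True
    have "(\<Sum>j\<in>J. m j) \<le> (\<Sum>j\<in>J. mu)" by (rule sum_mono) (rule le)
    also have "\<dots> = real (2 * G) * mu" using cJ by simp
    also have "\<dots> = real G * (2 * mu)" by simp
    also have "\<dots> \<le> G * Dv" using True by (intro mult_left_mono) auto
    finally show ?thesis .
  next
    case False
    have "(\<Sum>j\<in>J. m j) = (\<Sum>j\<in>S. m j) + (\<Sum>j\<in>J - S. m j)"
      using sum.subset_diff[OF Sfin(2) fin, of m] by (simp add: add.commute)
    also have "(\<Sum>j\<in>S. m j) \<le> (\<Sum>j\<in>S. mu)" by (rule sum_mono) (use le Sfin in auto)
    also have "(\<Sum>j\<in>J - S. m j) \<le> (\<Sum>j\<in>J - S. Dv - mu)" by (rule sum_mono) (rule out)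
    also have "(\<Sum>j\<in>S. mu) + (\<Sum>j\<in>J - S. Dv - mu) = real (card S) * mu + (real (2 * G) - real (card S)) * (Dv - mu)"
    proof -
      have c1: "card (J - S) = card J - card S" using Sfin by (simp add: card_Diff_subset)
      have c2: "card S \<le> card J" using Sfin fin by (simp add: card_mono)
      have "real (card (J - S)) = real (2 * G) - real (card S)" using c1 c2 cJ by (simp add: of_nat_diff)
      then show ?thesis by simp
    qed
    also have "\<dots> = real (2 * G) * (Dv - mu) + real (card S) * (2 * mu - Dv)" by (simp add: algebra_simps)
    also have "\<dots> \<le> real (2 * G) * (Dv - mu) + real G * (2 * mu - Dv)"
      using cS False by (intro add_left_mono mult_right_mono) auto
    also have "\<dots> = G * Dv" by (simp add: algebra_simps)
    finally show ?thesis by simp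
  qed
qed

context valn begin

lemma mv_det: "mv x + mv y \<le> v (det2 x y)"
proof -
  have a: "mv x + mv y \<le> v (fst x * snd y)" unfolding mv_def v_mult by (intro add_mono) auto
  have b: "mv x + mv y \<le> v (snd x * fst y)" unfolding mv_def v_mult by (intro add_mono) auto
  have "min (v (fst x * snd y)) (v (snd x * fst y)) \<le> v (det2 x y)" unfolding det2_def by (rule v_diff)
  then show ?thesis using a b by (meson min.bounded_iff order_trans)
qed

lemma cluster_small:
  fixes f :: "'a poly" and R :: "'a set" and r0 :: 'a
  assumes R: "R = poly_roots f" "finite R" and r0: "r0 \<in> R"
    and dR: "d_R v f = 0"
    and ncl: "\<not> (\<exists>s. is_cluster v f s \<and> s \<noteq> poly_roots f \<and> card s > g + 1)"
  shows "card {r\<in>R. r = r0 \<or> 0 < w (r - r0)} \<le> g + 1"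
proof -
  define C where "C = {r\<in>R. r = r0 \<or> 0 < w (r - r0)}"
  define d where "d = Min (insert 1 ((\<lambda>r. w (r - r0)) ` (C - {r0})))"
  have Cfin: "finite C" using R C_def by simp
  have dpos: "0 < d" unfolding d_def using Cfin by (subst Min_gr_iff) (auto simp: C_def)
  have dle: "d \<le> w (r - r0)" if "r \<in> C - {r0}" for r
    unfolding d_def using Cfin that by (intro Min_le) auto
  have Ceq: "C = {r \<in> poly_roots f. ereal d \<le> v (r - r0)}"
  proof (intro set_eqI iffI)
    fix r assume r: "r \<in> C"
    show "r \<in> {r \<in> poly_roots f. ereal d \<le> v (r - r0)}"
    proof (cases "r = r0")
      case True then show ?thesis using r R C_def by auto
    next
      case False
      then have "d \<le> w (r - r0)" using dle r by blast
      then show ?thesis using r R C_def False v_fin[of "r - r0"] by auto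
    qed
  next
    fix r assume r: "r \<in> {r \<in> poly_roots f. ereal d \<le> v (r - r0)}"
    show "r \<in> C"
    proof (rule ccontr)
      assume "r \<notin> C"
      then have "r \<noteq> r0" "w (r - r0) \<le> 0" "r \<in> R" using r R C_def by auto
      then have "v (r - r0) \<le> ereal 0" using v_fin[of "r - r0"] by simp
      then show False using r dpos by (metis (no_types, lifting) ereal_less_eq(3) linorder_not_le mem_Collect_eq order_trans)
    qed
  qed
  have Cne: "C \<noteq> {}" using r0 C_def by auto
  have ccl: "is_cluster v f C" unfolding is_cluster_def using Ceq Cne by blast
  have pos: "0 < v (r - r0)" if "r \<in> C" for r
  proof (cases "r = r0")
    case True then show ?thesis by simp
  next
    case False then show ?thesis using that C_def v_fin[of "r - r0"] by auto
  qed
  have CR: "C \<noteq> poly_roots f"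
  proof
    assume CR: "C = poly_roots f"
    define X where "X = {v (r - r') | r r'. r \<in> poly_roots f \<and> r' \<in> poly_roots f}"
    have "X = (\<lambda>(r, r'). v (r - r')) ` (R \<times> R)" unfolding X_def R by auto
    then have Xf: "finite X" "X \<noteq> {}" using R r0 by auto
    have "d_R v f \<in> X" unfolding d_R_def X_def[symmetric] using Xf by (rule Min_in)
    then obtain r r' where rr: "r \<in> C" "r' \<in> C" "v (r - r') = 0" using dR CR unfolding X_def by auto
    have "min (v (r - r0)) (v (r' - r0)) \<le> v ((r - r0) - (r' - r0))" by (rule v_diff)
    then have "min (v (r - r0)) (v (r' - r0)) \<le> 0" using rr by simp
    then show False using pos[OF rr(1)] pos[OF rr(2)] by (meson min_le_iff_disj not_le)
  qed
  show ?thesis using ncl ccl CR unfolding C_def[symmetric] by (meson not_le)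
qed

end

lemma poly_lin_simps:
  "lin (1, - r) = [:- r, 1:]" "lin (0, 1) = 1"
  by (simp_all add: lin_def one_pCons)

theorem theorem17p1:
  fixes K :: "'a::field set" and v :: "'a \<Rightarrow> ereal" and f :: "'a poly" and g :: nat
  assumes "local_field_setup K v"
    and "g \<ge> 2"
    and "set (coeffs f) \<subseteq> K"
    and "integral_poly v f"
    and "rsquarefree f"
    and "degree f = 2 * g + 1 \<or> degree f = 2 * g + 2"
    and "d_R v f = 0"
    and "v (lead_coeff f) = 0"
    and "\<not> (\<exists>s. is_cluster v f s \<and> s \<noteq> poly_roots f \<and> card s > g + 1)"
  shows "minimal_weq K v g f"
proof -
  note lfs = assms(1)[unfolded local_field_setup_def]
  interpret valn v using lfs by unfold_locales auto
  have ac: "alg_closed TYPE('a)" using lfs by blast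
  define R where "R = poly_roots f"
  define cf where "cf = lead_coeff f"
  have f0: "f \<noteq> 0" using assms(5) rsquarefree_def by blast
  have cf0: "cf \<noteq> 0" using f0 cf_def by simp
  have wcf: "w cf = 0" using assms(8) cf_def by (simp add: w_def)
  have sp: "finite R" "f = smult cf (\<Prod>r\<in>R. [:-r, 1:])" using split_rsf[OF ac assms(5)] R_def cf_def by auto
  have degR: "degree f = card R" using sp prod_lin_props[OF sp(1)] cf0 by (metis degree_smult_eq)
  define J :: "'a option set" where "J = Some ` R \<union> (if degree f = 2 * g + 1 then {None} else {})"
  define q :: "'a option \<Rightarrow> 'a \<times> 'a" where "q j = (case j of None \<Rightarrow> (0, 1) | Some r \<Rightarrow> (1, - r))" for j
  have finJ: "finite J" using sp J_def by simp
  have SJ: "Some r \<in> J \<longleftrightarrow> r \<in> R" for r unfolding J_def by (cases "degree f = 2 * g + 1") auto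
  have cJ: "card J = 2 * g + 2"
  proof (cases "degree f = 2 * g + 1")
    case True
    then have "J = insert None (Some ` R)" using J_def by auto
    then have "card J = Suc (card (Some ` R))" using sp by (simp add: card_insert_if)
    then show ?thesis using True degR by (simp add: card_image)
  next
    case False
    then show ?thesis using J_def assms(6) degR by (simp add: card_image)
  qed
  have prodJ: "(\<Prod>j\<in>J. lin (q j)) = (\<Prod>r\<in>R. [:-r, 1:])"
  proof -
    have s: "(\<Prod>j\<in>Some ` R. lin (q j)) = (\<Prod>r\<in>R. [:-r, 1:])"
      by (simp add: prod.reindex q_def poly_lin_simps)
    show ?thesis
    proof (cases "degree f = 2 * g + 1")
      case True
      then have "J = insert None (Some ` R)" using J_def by auto
      then have "(\<Prod>j\<in>J. lin (q j)) = lin (q None) * (\<Prod>j\<in>Some ` R. lin (q j))"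
        using sp by simp
      then show ?thesis using s by (simp add: q_def poly_lin_simps)
    next
      case False
      then show ?thesis using J_def s by simp
    qed
  qed
  have fJ: "f = smult cf (\<Prod>j\<in>J. lin (q j))" using sp prodJ by simp
  have dSS: "det2 (q (Some r)) (q (Some r')) = r - r'" for r r' by (simp add: q_def det2_def)
  have dSN: "det2 (q (Some r)) (q None) = 1" for r by (simp add: q_def det2_def)
  have dNS: "det2 (q None) (q (Some r)) = -1" for r by (simp add: q_def det2_def)
  have dt: "det2 (q j) (q k) \<noteq> 0" if jk: "j \<in> J" "k \<in> J" "j \<noteq> k" for j k
  proof (cases j)
    case None
    then obtain r where "k = Some r" using jk None by (cases k) auto
    then show ?thesis using None dNS by simp
  next
    case (Some r)
    show ?thesis
    proof (cases k)
      case None then show ?thesis using Some dSN by simp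
    next
      case (Some r') then show ?thesis using \<open>j = Some r\<close> jk dSS by simp
    qed
  qed
  have qnz: "q j \<noteq> (0, 0)" for j by (cases j) (auto simp: q_def)
  define DD where "DD = (\<Sum>j\<in>J. \<Sum>k\<in>J - {j}. w (det2 (q j) (q k)))"
  have vf: "v (weq_disc g f) = ereal DD"
    using disc_formula[OF finJ cJ cf0, of q] dt wcf fJ DD_def by simp
  show ?thesis unfolding minimal_weq_def
  proof (intro conjI allI impI)
    show "integral_poly v f" by (rule assms(4))
  next
    fix h assume iso: "K_isomorphic_model K g f h" and ih: "integral_poly v h"
    then obtain a b c d e where D: "a * d - b * c \<noteq> 0" and e0: "e \<noteq> 0"
      and hdef: "h = weq_transform g f a b c d e"
      unfolding K_isomorphic_model_def by blast
    define Dt where "Dt = a * d - b * c"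
    define q' where "q' j = tr a b c d (q j)" for j
    define lam where "lam = cf / e ^ 2"
    have lam0: "lam \<noteq> 0" using cf0 e0 lam_def by simp
    have wlam: "w lam = - 2 * w e" using cf0 e0 wcf unfolding lam_def by (simp add: w_divide w_power)
    have hq: "h = smult lam (\<Prod>j\<in>J. lin (q' j))"
      unfolding hdef lam_def q'_def by (rule weq_transform_prod[OF finJ cJ fJ])
    have dt': "det2 (q' j) (q' k) = Dt * det2 (q j) (q k)" for j k
      unfolding q'_def Dt_def by (rule det2_tr)
    have dtn': "det2 (q' j) (q' k) \<noteq> 0" if "j \<in> J" "k \<in> J" "j \<noteq> k" for j k
      using dt[OF that] D dt' Dt_def by simp
    have vh: "v (weq_disc g h) = ereal ((4 * real g + 2) * w lam + (\<Sum>j\<in>J. \<Sum>k\<in>J - {j}. w (det2 (q' j) (q' k))))"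
      unfolding hq by (rule disc_formula[OF finJ cJ lam0]) (rule dtn')
    have DD': "(\<Sum>j\<in>J. \<Sum>k\<in>J - {j}. w (det2 (q' j) (q' k))) = (2 * real g + 2) * (2 * real g + 1) * w Dt + DD"
    proof -
      have "(\<Sum>j\<in>J. \<Sum>k\<in>J - {j}. w (det2 (q' j) (q' k))) = (\<Sum>j\<in>J. \<Sum>k\<in>J - {j}. w Dt + w (det2 (q j) (q k)))"
        by (rule sum.cong[OF refl], rule sum.cong[OF refl]) (use dt D Dt_def in \<open>auto simp: dt' w_mult\<close>)
      also have "\<dots> = (\<Sum>j\<in>J. real (card (J - {j})) * w Dt) + DD"
        unfolding DD_def by (simp add: sum.distrib)
      also have "(\<Sum>j\<in>J. real (card (J - {j})) * w Dt) = (\<Sum>j\<in>J. (2 * real g + 1) * w Dt)"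
        by (rule sum.cong[OF refl]) (use finJ cJ in \<open>simp add: card_Diff_singleton\<close>)
      also have "\<dots> = (2 * real g + 2) * (2 * real g + 1) * w Dt" using cJ by simp
      finally show ?thesis .
    qed
    define m where "m j = real_of_ereal (mv (q' j))" for j
    have q'nz: "q' j \<noteq> (0, 0)" for j unfolding q'_def using tr_nz[OF D qnz] .
    have mvm: "mv (q' j) = ereal (m j)" for j using mv_fin[OF q'nz[of j]] m_def by (cases "mv (q' j)") auto
    obtain i where ci: "v (coeff (\<Prod>j\<in>J. lin (q' j)) i) = (\<Sum>j\<in>J. mv (q' j))"
      using gauss[OF finJ, of q'] q'nz unfolding cont_def by blast
    have "0 \<le> v (coeff h i)" using ih unfolding integral_poly_def by blast
    also have "v (coeff h i) = v lam + (\<Sum>j\<in>J. mv (q' j))" unfolding hq by (simp add: v_mult ci)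
    also have "\<dots> = ereal (w lam + (\<Sum>j\<in>J. m j))" using v_fin[OF lam0] by (simp add: mvm sum_ereal)
    finally have gau: "0 \<le> - 2 * w e + (\<Sum>j\<in>J. m j)" using wlam by simp
    have pr: "m j + m k \<le> w Dt" if "j \<in> J" "k \<in> J" "j \<noteq> k" "w (det2 (q k) (q j)) \<le> 0" for j k
    proof -
      have "ereal (m k + m j) \<le> v (det2 (q' k) (q' j))" using mv_det[of "q' k" "q' j"] by (simp add: mvm)
      also have "\<dots> = ereal (w Dt + w (det2 (q k) (q j)))"
        using dt[OF that(2,1)] that(3) D Dt_def v_fin dt' by (simp add: w_mult)
      finally show ?thesis using that(4) by simp
    qed
    have Sb: "card {k\<in>J. k = j0 \<or> \<not> w (det2 (q k) (q j0)) \<le> 0} \<le> g + 1" if j0: "j0 \<in> J" for j0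
    proof (cases j0)
      case None
      have sub: "{k\<in>J. k = j0 \<or> \<not> w (det2 (q k) (q j0)) \<le> 0} \<subseteq> {None}"
      proof (rule subsetI)
        fix k assume k: "k \<in> {k\<in>J. k = j0 \<or> \<not> w (det2 (q k) (q j0)) \<le> 0}"
        show "k \<in> {None}"
        proof (cases k)
          case None then show ?thesis by simp
        next
          case (Some r) then show ?thesis using k \<open>j0 = None\<close> dSN by simp
        qed
      qed
      have "card {k\<in>J. k = j0 \<or> \<not> w (det2 (q k) (q j0)) \<le> 0} \<le> card {None :: 'a option}"
        by (rule card_mono[OF _ sub]) simp
      then show ?thesis by simp
    next
      case (Some r0)
      have r0: "r0 \<in> R" using j0 Some SJ by simp
      have sub: "{k\<in>J. k = j0 \<or> \<not> w (det2 (q k) (q j0)) \<le> 0} \<subseteq> Some ` {r\<in>R. r = r0 \<or> 0 < w (r - r0)}"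
      proof (rule subsetI)
        fix k assume k: "k \<in> {k\<in>J. k = j0 \<or> \<not> w (det2 (q k) (q j0)) \<le> 0}"
        show "k \<in> Some ` {r\<in>R. r = r0 \<or> 0 < w (r - r0)}"
        proof (cases k)
          case None then show ?thesis using k Some dNS by simp
        next
          case (Some r)
          then have "r \<in> R" using k SJ by simp
          then show ?thesis using k Some \<open>j0 = Some r0\<close> dSS by (auto simp: not_le)
        qed
      qed
      have "card {k\<in>J. k = j0 \<or> \<not> w (det2 (q k) (q j0)) \<le> 0} \<le> card (Some ` {r\<in>R. r = r0 \<or> 0 < w (r - r0)})"
        by (rule card_mono[OF _ sub]) (use sp(1) in simp)
      also have "\<dots> = card {r\<in>R. r = r0 \<or> 0 < w (r - r0)}" by (simp add: card_image)
      also have "\<dots> \<le> g + 1"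
        by (rule cluster_small[OF R_def sp(1) r0 assms(7) assms(9)])
      finally show ?thesis .
    qed
    have cJ2: "card J = 2 * (g + 1)" using cJ by simp
    have comb: "(\<Sum>j\<in>J. m j) \<le> real (g + 1) * w Dt"
      by (rule comb_bound[OF finJ cJ2, of "\<lambda>k j. w (det2 (q k) (q j)) \<le> 0"]) (use Sb pr in auto)
    have "real (g + 1) * w Dt = (real g + 1) * w Dt" by simp
    then have "0 \<le> - 2 * w e + (real g + 1) * w Dt" using gau comb by linarith
    then have nn: "0 \<le> (4 * real g + 2) * (- 2 * w e + (real g + 1) * w Dt)"
      by (intro mult_nonneg_nonneg) auto
    have "v (weq_disc g h) = ereal ((4 * real g + 2) * (- 2 * w e + (real g + 1) * w Dt) + DD)"
      unfolding vh DD' wlam by (simp add: algebra_simps)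
    then show "v (weq_disc g f) \<le> v (weq_disc g h)" unfolding vf using nn by simp
  qed
qed


end
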